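(* For $n\ge 0$, let $T_n$ be the poset consisting of a chain $a_1<a_2<\dots<a_n$, two incomparable elements $b,c$ with $a_n<b$ and $a_n<c$, and a chain $e_1<\dots<e_n$ with $b<e_1$ and $c<e_1$ (when $n=0$, $T_0$ is a two-element antichain), and let $R_n=J(T_n)$ be its lattice of order ideals (a lattice with $2n+4$ elements, the minuscule "double tailed diamond" lattice). Then \[ \d(R_n)=\frac{2}{3}(n+3)\left(4n^2+9n+8\right). \]
   Context: $J(P)$ is the lattice of order ideals of a finite poset $P$ ordered by inclusion. For a finite poset $Q$, $\d(Q)=\sum_{(p,q)\in Q\times Q}\d(p,q)$, where $\d(p,q)$ is the graph distance in the Hasse diagram of $Q$ (edges = cover relations) and the sum runs over ordered pairs. *)

theory Defs
  imports Complex_Main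
begin

definition order_ideals :: "'a set \<Rightarrow> ('a \<Rightarrow> 'a \<Rightarrow> bool) \<Rightarrow> 'a set set" where
  "order_ideals P le = {I. I \<subseteq> P \<and> (\<forall>x\<in>I. \<forall>y\<in>P. le y x \<longrightarrow> y \<in> I)}"

definition covers :: "'a set \<Rightarrow> ('a \<Rightarrow> 'a \<Rightarrow> bool) \<Rightarrow> 'a \<Rightarrow> 'a \<Rightarrow> bool" where
  "covers Q le x y \<longleftrightarrow> x \<in> Q \<and> y \<in> Q \<and> le x y \<and> x \<noteq> y \<and>
     \<not> (\<exists>z\<in>Q. le x z \<and> x \<noteq> z \<and> le z y \<and> z \<noteq> y)"

definition hasse_adj :: "'a set \<Rightarrow> ('a \<Rightarrow> 'a \<Rightarrow> bool) \<Rightarrow> 'a \<Rightarrow> 'a \<Rightarrow> bool" where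
  "hasse_adj Q le x y \<longleftrightarrow> covers Q le x y \<or> covers Q le y x"

definition hasse_dist :: "'a set \<Rightarrow> ('a \<Rightarrow> 'a \<Rightarrow> bool) \<Rightarrow> 'a \<Rightarrow> 'a \<Rightarrow> nat" where
  "hasse_dist Q le x y = (LEAST k. \<exists>f :: nat \<Rightarrow> 'a. f 0 = x \<and> f k = y \<and>
      (\<forall>i<k. hasse_adj Q le (f i) (f (Suc i))))"

definition dist_sum :: "'a set \<Rightarrow> ('a \<Rightarrow> 'a \<Rightarrow> bool) \<Rightarrow> nat" where
  "dist_sum Q le = (\<Sum>p\<in>Q. \<Sum>q\<in>Q. hasse_dist Q le p q)"

datatype tnode = A nat | B | C | E nat

definition T_carrier :: "nat \<Rightarrow> tnode set" where
  "T_carrier n = {A i | i. 1 \<le> i \<and> i \<le> n} \<union> {B, C} \<union> {E i | i. 1 \<le> i \<and> i \<le> n}"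

fun T_level :: "nat \<Rightarrow> tnode \<Rightarrow> nat" where
  "T_level n (A i) = i"
| "T_level n B = n + 1"
| "T_level n C = n + 1"
| "T_level n (E i) = n + 1 + i"

text \<open>x \<le> y in T_n iff x = y or x lies on a strictly lower level (b, c are the only
  incomparable pair); this is the order generated by a_1<...<a_n<b,c<e_1<...<e_n.\<close>
definition T_le :: "nat \<Rightarrow> tnode \<Rightarrow> tnode \<Rightarrow> bool" where
  "T_le n x y \<longleftrightarrow> x = y \<or> T_level n x < T_level n y"

definition R :: "nat \<Rightarrow> tnode set set" where
  "R n = order_ideals (T_carrier n) (T_le n)"

end

theory Submission
  imports Defs
begin


definition Ix :: "nat \<Rightarrow> (nat \<times> bool) set" where
  "Ix n = {(k,False)| k. k \<le> 2*n+2} \<union> {(n+1,True)}"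
definition lei :: "nat \<times> bool \<Rightarrow> nat \<times> bool \<Rightarrow> bool" where
  "lei u v \<longleftrightarrow> fst u < fst v \<or> u = v"
definition dd :: "nat \<Rightarrow> nat \<Rightarrow> nat" where
  "dd a b = (if a \<le> b then b - a else a - b)"
definition dI :: "nat \<times> bool \<Rightarrow> nat \<times> bool \<Rightarrow> nat" where
  "dI u v = (if fst u = fst v \<and> u \<noteq> v then 2 else dd (fst u) (fst v))"

lemma Ix_mem: "(k,b) \<in> Ix n \<longleftrightarrow> (if b then k = n+1 else k \<le> 2*n+2)"
  by (auto simp: Ix_def)

lemma Ix_fst: "u \<in> Ix n \<Longrightarrow> fst u \<le> 2*n+2"
  by (cases u) (auto simp: Ix_mem split: if_splits)

lemma Ix_dup: "u \<in> Ix n \<Longrightarrow> v \<in> Ix n \<Longrightarrow> fst u = fst v \<Longrightarrow> u \<noteq> v \<Longrightarrow> fst u = n+1"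
  by (cases u; cases v) (auto simp: Ix_mem split: if_splits)

lemma covers_Ix: "covers (Ix n) lei u v \<longleftrightarrow> u \<in> Ix n \<and> v \<in> Ix n \<and> fst v = Suc (fst u)"
proof
  assume c: "covers (Ix n) lei u v"
  hence u: "u \<in> Ix n" and v: "v \<in> Ix n" and lt: "fst u < fst v"
    and nz: "\<not> (\<exists>z\<in>Ix n. lei u z \<and> u \<noteq> z \<and> lei z v \<and> z \<noteq> v)"
    by (auto simp: covers_def lei_def)
  have "fst v = Suc (fst u)"
  proof (rule ccontr)
    assume "fst v \<noteq> Suc (fst u)"
    hence "Suc (fst u) < fst v" using lt by simp
    moreover have "fst v \<le> 2*n+2" using Ix_fst[OF v] .
    ultimately have "(Suc (fst u), False) \<in> Ix n" by (simp add: Ix_mem)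
    with nz \<open>Suc (fst u) < fst v\<close> show False
    proof -
      have "lei u (Suc (fst u), False)" "lei (Suc (fst u), False) v"
        "u \<noteq> (Suc (fst u), False)" "(Suc (fst u), False) \<noteq> v"
        using \<open>Suc (fst u) < fst v\<close> by (auto simp: lei_def prod_eq_iff)
      thus False using nz \<open>(Suc (fst u), False) \<in> Ix n\<close> by blast
    qed
  qed
  thus "u \<in> Ix n \<and> v \<in> Ix n \<and> fst v = Suc (fst u)" using u v by simp
next
  assume "u \<in> Ix n \<and> v \<in> Ix n \<and> fst v = Suc (fst u)"
  thus "covers (Ix n) lei u v" by (auto simp: covers_def lei_def)
qed

lemma adj_Ix: "hasse_adj (Ix n) lei u v \<longleftrightarrow> u \<in> Ix n \<and> v \<in> Ix n \<and> (fst v = Suc (fst u) \<or> fst u = Suc (fst v))"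
  by (auto simp: hasse_adj_def covers_Ix)

lemma walk_lower:
  assumes "\<forall>i<k. hasse_adj (Ix n) lei (f i) (f (Suc i))"
  shows "i \<le> k \<Longrightarrow> dd (fst (f 0)) (fst (f i)) \<le> i"
proof (induction i)
  case 0 then show ?case by (simp add: dd_def)
next
  case (Suc i)
  hence "dd (fst (f 0)) (fst (f i)) \<le> i" by simp
  moreover have "fst (f (Suc i)) = Suc (fst (f i)) \<or> fst (f i) = Suc (fst (f (Suc i)))"
    using assms Suc.prems by (auto simp: adj_Ix)
  ultimately show ?case by (auto simp: dd_def split: if_splits)
qed

lemma dist_Ix:
  assumes u: "u \<in> Ix n" and v: "v \<in> Ix n"
  shows "hasse_dist (Ix n) lei u v = dI u v"
  unfolding hasse_dist_def
proof (rule Least_equality)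
  show "\<exists>f. f 0 = u \<and> f (dI u v) = v \<and> (\<forall>i<dI u v. hasse_adj (Ix n) lei (f i) (f (Suc i)))"
  proof (cases "fst u = fst v \<and> u \<noteq> v")
    case True
    hence d: "dI u v = 2" by (simp add: dI_def)
    have f: "fst u = n+1" "fst v = n+1" using Ix_dup[OF u v] True by auto
    let ?f = "\<lambda>i::nat. if i = 0 then u else if i = 1 then (n+2,False) else v"
    have "\<forall>i<2. hasse_adj (Ix n) lei (?f i) (?f (Suc i))"
      using u v f by (auto simp: adj_Ix Ix_mem less_Suc_eq)
    thus ?thesis using d by (intro exI[of _ ?f]) auto
  next
    case False
    hence d: "dI u v = dd (fst u) (fst v)" by (auto simp: dI_def)
    show ?thesis
    proof (cases "u = v")
      case True
      thus ?thesis using d by (intro exI[of _ "\<lambda>_. u"]) (simp add: dd_def)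
    next
      case uv: False
      define a where "a = fst u"
      define b where "b = fst v"
      define m where "m = dd a b"
      define j where "j = (\<lambda>i. if a \<le> b then a + i else a - i)"
      define f where "f = (\<lambda>i. if i = 0 then u else if i = m then v else (j i, False))"
      have ab: "a \<noteq> b" using False uv a_def b_def by auto
      have bnd: "b \<le> 2*n+2" "a \<le> 2*n+2" using Ix_fst u v a_def b_def by auto
      have m0: "m > 0" using ab by (auto simp: m_def dd_def)
      have fstf: "i \<le> m \<Longrightarrow> fst (f i) = j i" for i
        using a_def b_def by (auto simp: f_def j_def m_def dd_def)
      have memf: "i \<le> m \<Longrightarrow> f i \<in> Ix n" for i
        using u v bnd by (auto simp: f_def j_def m_def dd_def Ix_mem)
      have "\<forall>i<m. hasse_adj (Ix n) lei (f i) (f (Suc i))"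
      proof (intro allI impI)
        fix i assume i: "i < m"
        have "fst (f (Suc i)) = j (Suc i)" "fst (f i) = j i" using i fstf by auto
        moreover have "j (Suc i) = Suc (j i) \<or> j i = Suc (j (Suc i))"
          using i ab by (auto simp: j_def m_def dd_def)
        ultimately show "hasse_adj (Ix n) lei (f i) (f (Suc i))"
          using memf i by (auto simp: adj_Ix)
      qed
      moreover have "f 0 = u" "f m = v" using m0 by (auto simp: f_def)
      ultimately show ?thesis using d m_def a_def b_def by (intro exI[of _ f]) auto
    qed
  qed
next
  fix k assume "\<exists>f. f 0 = u \<and> f k = v \<and> (\<forall>i<k. hasse_adj (Ix n) lei (f i) (f (Suc i)))"
  then obtain f where f: "f 0 = u" "f k = v" "\<forall>i<k. hasse_adj (Ix n) lei (f i) (f (Suc i))" by blast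
  have low: "dd (fst u) (fst v) \<le> k" using walk_lower[OF f(3), of k] f by simp
  show "dI u v \<le> k"
  proof (cases "fst u = fst v \<and> u \<noteq> v")
    case True
    have "k \<noteq> 0" using f True by (metis)
    moreover have "k \<noteq> 1"
    proof
      assume "k = 1"
      with f(3) have "hasse_adj (Ix n) lei (f 0) (f 1)" by auto
      with f True \<open>k=1\<close> show False by (auto simp: adj_Ix)
    qed
    ultimately show ?thesis using True by (simp add: dI_def)
  next
    case False thus ?thesis using low by (auto simp: dI_def)
  qed
qed



lemma int_dd: "int (dd a b) = \<bar>int a - int b\<bar>"
  by (auto simp: dd_def)

lemma col_sum: "x \<ge> M \<Longrightarrow> 2 * (\<Sum>i\<le>M. \<bar>int i - int x\<bar>) = (int M + 1) * (2 * int x - int M)"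
proof (induction M)
  case 0 then show ?case by simp
next
  case (Suc M)
  then show ?case by (simp add: algebra_simps)
qed

lemma sq_sum: "3 * (\<Sum>i\<le>M. \<Sum>j\<le>M. \<bar>int i - int j\<bar>) = int M * (int M + 1) * (int M + 2)"
proof (induction M)
  case 0 then show ?case by simp
next
  case (Suc M)
  have c1: "2 * (\<Sum>i\<le>M. \<bar>int i - int (Suc M)\<bar>) = (int M + 1) * (int M + 2)"
    using col_sum[of M "Suc M"] by (simp add: algebra_simps)
  have c2: "(\<Sum>j\<le>M. \<bar>int (Suc M) - int j\<bar>) = (\<Sum>i\<le>M. \<bar>int i - int (Suc M)\<bar>)"
    by (simp add: abs_minus_commute)
  have "(\<Sum>i\<le>Suc M. \<Sum>j\<le>Suc M. \<bar>int i - int j\<bar>) =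
     (\<Sum>i\<le>M. \<Sum>j\<le>M. \<bar>int i - int j\<bar>) + 2 * (\<Sum>i\<le>M. \<bar>int i - int (Suc M)\<bar>)"
    using c2 by (simp add: sum.distrib)
  then show ?case using Suc.IH c1 by (simp add: algebra_simps)
qed

lemma mid_sum: "2 * (\<Sum>i\<le>a+b. \<bar>int i - int a\<bar>) = int a * (int a + 1) + int b * (int b + 1)"
proof (induction b)
  case 0 then show ?case using col_sum[of a a] by (simp add: algebra_simps)
next
  case (Suc b) then show ?case by (simp add: algebra_simps)
qed

lemma aux: "int (if x = n+1 then 2 else dd x (n+1)) = \<bar>int x - int (n+1)\<bar> + (if x = n+1 then 2 else 0)"
  by (cases "x = n+1") (simp_all add: int_dd)

lemma S_int: "int (dI (x,False) (n+1,True)) = \<bar>int x - int (n+1)\<bar> + (if x = n+1 then 2 else 0)"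
  by (cases "x = n+1") (auto simp: dI_def dd_def)

lemma Ix_split: "Ix n = insert (n+1,True) ((\<lambda>k. (k,False)) ` {..2*n+2})"
  by (auto simp: Ix_def)

lemma P2g: "a \<le> M \<Longrightarrow> int (\<Sum>i\<le>M. dI (i,False) (a,True)) = (\<Sum>i\<le>M. \<bar>int i - int a\<bar>) + 2"
proof -
  assume aM: "a \<le> M"
  have "int (\<Sum>i\<le>M. dI (i,False) (a,True)) = (\<Sum>i\<le>M. \<bar>int i - int a\<bar> + (if i = a then 2 else 0))"
    unfolding of_nat_sum by (rule sum.cong[OF refl]) (auto simp: dI_def dd_def)
  also have "\<dots> = (\<Sum>i\<le>M. \<bar>int i - int a\<bar>) + 2"
  proof -
    have "(\<Sum>i\<le>M. (if i = a then 2 else 0::int)) = 2"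
      using sum.delta'[of "{..M}" a "\<lambda>_. 2::int"] aM by simp
    thus ?thesis by (simp only: sum.distrib)
  qed
  finally show ?thesis .
qed

lemma P2: "int (\<Sum>i\<le>2*n+2. dI (i,False) (n+1,True)) = (\<Sum>i\<le>2*n+2. \<bar>int i - int (n+1)\<bar>) + 2"
  by (rule P2g) simp

lemma P3: "2 * (\<Sum>i\<le>2*n+2. \<bar>int i - int (n+1)\<bar>) = 2 * (int n + 1) * (int n + 2)"
proof -
  have e: "2*n+2 = (n+1)+(n+1)" by simp
  show ?thesis unfolding e mid_sum by (simp add: algebra_simps)
qed

lemma P4g: "3 * int (\<Sum>i\<le>M. \<Sum>j\<le>M. dd i j) = int M * (int M + 1) * (int M + 2)"
proof -
  have "int (\<Sum>i\<le>M. \<Sum>j\<le>M. dd i j) = (\<Sum>i\<le>M. \<Sum>j\<le>M. \<bar>int i - int j\<bar>)"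
    by (simp only: of_nat_sum int_dd)
  thus ?thesis using sq_sum[of M] by simp
qed

lemma P1: "(\<Sum>u\<in>Ix n. \<Sum>v\<in>Ix n. dI u v) =
    (\<Sum>i\<le>2*n+2. \<Sum>j\<le>2*n+2. dd i j) + 2 * (\<Sum>i\<le>2*n+2. dI (i,False) (n+1,True))"
proof -
  let ?c = "(n+1,True)" and ?L = "(\<lambda>k. (k,False)) ` {..2*n+2}"
  have nin: "?c \<notin> ?L" by auto
  have inj: "inj_on (\<lambda>k. (k,False)) {..2*n+2}" by (auto simp: inj_on_def)
  have fin: "finite ?L" by simp
  have dc: "dI (k,False) ?c = (if k = n+1 then 2 else dd k (n+1))" for k
    by (auto simp: dI_def)
  have dc': "dI ?c (k,False) = (if k = n+1 then 2 else dd k (n+1))" for k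
    by (auto simp: dI_def dd_def)
  have dkk: "dI (i,False) (j,False) = dd i j" for i j by (auto simp: dI_def dd_def)
  have cc: "dI ?c ?c = 0" by (simp add: dI_def dd_def)
  define S where "S = (\<Sum>i\<le>2*n+2. dI (i,False) ?c)"
  have S': "(\<Sum>i\<le>2*n+2. dI ?c (i,False)) = S" unfolding S_def using dc dc' by simp
  have r1: "sum g ?L = (\<Sum>i\<le>2*n+2. g (i,False))" for g :: "nat \<times> bool \<Rightarrow> nat"
    by (rule sum.reindex_cong[OF inj]) auto
  have "(\<Sum>u\<in>Ix n. \<Sum>v\<in>Ix n. dI u v) = (\<Sum>u\<in>insert ?c ?L. dI u ?c + sum (dI u) ?L)"
    unfolding Ix_split using nin fin by (intro sum.cong refl) (simp add: sum.insert)
  also have "\<dots> = (dI ?c ?c + sum (dI ?c) ?L) + (\<Sum>u\<in>?L. dI u ?c + sum (dI u) ?L)"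
    by (rule sum.insert[OF fin nin])
  also have "\<dots> = S + ((\<Sum>i\<le>2*n+2. dI (i,False) ?c) + (\<Sum>i\<le>2*n+2. \<Sum>j\<le>2*n+2. dI (i,False) (j,False)))"
    unfolding r1 sum.distrib cc S' by simp
  finally show ?thesis
    unfolding dkk S_def by simp
qed

lemma sum_Ix: "3 * int (\<Sum>u\<in>Ix n. \<Sum>v\<in>Ix n. dI u v) = 8*int n^3 + 42*int n^2 + 70*int n + 48"
proof -
  define X where "X = (\<Sum>i\<le>2*n+2. \<Sum>j\<le>2*n+2. dd i j)"
  define Y where "Y = (\<Sum>i\<le>2*n+2. dI (i,False) (n+1,True))"
  define Z where "Z = (\<Sum>i\<le>2*n+2. \<bar>int i - int (n+1)\<bar>)"
  have 1: "(\<Sum>u\<in>Ix n. \<Sum>v\<in>Ix n. dI u v) = X + 2*Y" unfolding X_def Y_def by (rule P1)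
  have 2: "int Y = Z + 2" unfolding Y_def Z_def by (rule P2)
  have 3: "2*Z = 2*(int n + 1)*(int n + 2)" unfolding Z_def by (rule P3)
  hence z3: "Z = (int n + 1)*(int n + 2)" by (metis mult.assoc mult_cancel_left zero_neq_numeral)
  have 4: "3*int X = int (2*n+2) * (int (2*n+2) + 1) * (int (2*n+2) + 2)" unfolding X_def by (rule P4g)
  have "3 * int (\<Sum>u\<in>Ix n. \<Sum>v\<in>Ix n. dI u v) = 3 * int X + 6 * int Y" unfolding 1 by simp
  also have "\<dots> = int (2*n+2) * (int (2*n+2) + 1) * (int (2*n+2) + 2) + 6 * ((int n + 1)*(int n + 2) + 2)"
    unfolding 4 2 z3 ..
  also have "\<dots> = 8*int n^3 + 42*int n^2 + 70*int n + 48"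
    by (simp add: algebra_simps power2_eq_square power3_eq_cube)
  finally show ?thesis .
qed



lemma T_mem[simp]:
  "A i \<in> T_carrier n \<longleftrightarrow> 1 \<le> i \<and> i \<le> n"
  "B \<in> T_carrier n" "C \<in> T_carrier n"
  "E i \<in> T_carrier n \<longleftrightarrow> 1 \<le> i \<and> i \<le> n"
  by (auto simp: T_carrier_def)

lemma T_finite: "finite (T_carrier n)"
proof -
  have "T_carrier n \<subseteq> A ` {..n} \<union> {B, C} \<union> E ` {..n}"
    by (auto simp: T_carrier_def)
  thus ?thesis by (rule finite_subset) simp
qed

definition Dn :: "nat \<Rightarrow> nat \<Rightarrow> tnode set" where
  "Dn n m = {x \<in> T_carrier n. T_level n x \<le> m}"

lemma lev_pos: "x \<in> T_carrier n \<Longrightarrow> 1 \<le> T_level n x"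
  by (cases x) auto

lemma lev_le: "x \<in> T_carrier n \<Longrightarrow> T_level n x \<le> 2*n+1"
  by (cases x) auto

lemma lev_eq: "x \<in> T_carrier n \<Longrightarrow> y \<in> T_carrier n \<Longrightarrow> T_level n x = T_level n y \<Longrightarrow>
   x = y \<or> (x \<in> {B,C} \<and> y \<in> {B,C})"
  by (cases x; cases y) auto

lemma wit: "1 \<le> a \<Longrightarrow> a \<le> 2*n+1 \<Longrightarrow> \<exists>x\<in>T_carrier n. T_level n x = a"
proof -
  assume "1 \<le> a" "a \<le> 2*n+1"
  show ?thesis
  proof (cases "a \<le> n")
    case True thus ?thesis using \<open>1 \<le> a\<close> by (intro bexI[of _ "A a"]) auto
  next
    case False
    show ?thesis
    proof (cases "a = n+1")
      case True thus ?thesis by (intro bexI[of _ B]) auto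
    next
      case False
      hence "n+2 \<le> a" using \<open>\<not> a \<le> n\<close> by simp
      thus ?thesis using \<open>a \<le> 2*n+1\<close> by (intro bexI[of _ "E (a-n-1)"]) auto
    qed
  qed
qed

lemma Dn_sub: "a \<le> 2*n+1 \<Longrightarrow> Dn n a \<subseteq> Dn n b \<longleftrightarrow> a \<le> b"
proof
  assume a: "a \<le> 2*n+1" and s: "Dn n a \<subseteq> Dn n b"
  show "a \<le> b"
  proof (rule ccontr)
    assume "\<not> a \<le> b"
    hence "1 \<le> a" by simp
    from wit[OF this a] have "\<exists>x\<in>T_carrier n. T_level n x = a" .
    then obtain x where "x \<in> T_carrier n" "T_level n x = a" by blast
    hence "x \<in> Dn n a" by (simp add: Dn_def)
    with s have "T_level n x \<le> b" by (auto simp: Dn_def)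
    with \<open>T_level n x = a\<close> \<open>\<not> a \<le> b\<close> show False by simp
  qed
qed (auto simp: Dn_def)

lemma B_notin: "B \<notin> Dn n n" "C \<notin> Dn n n" by (auto simp: Dn_def)

lemma B_in: "B \<in> Dn n m \<longleftrightarrow> n+1 \<le> m" "C \<in> Dn n m \<longleftrightarrow> n+1 \<le> m" by (auto simp: Dn_def)

lemma Dn_mono: "a \<le> b \<Longrightarrow> Dn n a \<subseteq> Dn n b" by (auto simp: Dn_def)

lemma XB_sub: "insert B (Dn n n) \<subseteq> Dn n b \<longleftrightarrow> n+1 \<le> b"
  "insert C (Dn n n) \<subseteq> Dn n b \<longleftrightarrow> n+1 \<le> b"
  using Dn_mono[of n b n] B_in by auto

lemma sub_XB: "Dn n a \<subseteq> insert B (Dn n n) \<longleftrightarrow> a \<le> n"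
  "Dn n a \<subseteq> insert C (Dn n n) \<longleftrightarrow> a \<le> n"
proof -
  have "C \<in> Dn n a \<Longrightarrow> C \<in> insert B (Dn n n) \<Longrightarrow> False" "B \<in> Dn n a \<Longrightarrow> B \<in> insert C (Dn n n) \<Longrightarrow> False"
    using B_notin by auto
  thus "Dn n a \<subseteq> insert B (Dn n n) \<longleftrightarrow> a \<le> n" "Dn n a \<subseteq> insert C (Dn n n) \<longleftrightarrow> a \<le> n"
    using Dn_mono[of a n n] B_in[of n a] by (auto)
qed

lemma BC_sub: "\<not> insert B (Dn n n) \<subseteq> insert C (Dn n n)" "\<not> insert C (Dn n n) \<subseteq> insert B (Dn n n)"
  using B_notin by auto



definition el :: "nat \<Rightarrow> nat \<times> bool \<Rightarrow> tnode set" where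
  "el n u = (if fst u \<le> n then Dn n (fst u) else if fst u = n+1 then
     (if snd u then insert C (Dn n n) else insert B (Dn n n)) else Dn n (fst u - 1))"

lemma el_iso:
  assumes u: "u \<in> Ix n" and v: "v \<in> Ix n"
  shows "el n u \<subseteq> el n v \<longleftrightarrow> lei u v"
proof -
  obtain k b where ub: "u = (k,b)" by (cases u)
  obtain k' b' where vb: "v = (k',b')" by (cases v)
  have ku: "k \<le> 2*n+2" "b \<Longrightarrow> k = n+1" using u ub by (auto simp: Ix_mem split: if_splits)
  have kv: "k' \<le> 2*n+2" "b' \<Longrightarrow> k' = n+1" using v vb by (auto simp: Ix_mem split: if_splits)
  consider "k \<le> n" | "k = n+1" | "n+2 \<le> k" by linarith
  then show ?thesis
  proof cases
    case 1
    hence ku': "\<not> b" using ku by auto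
    consider "k' \<le> n" | "k' = n+1" | "n+2 \<le> k'" by linarith
    then show ?thesis
    proof cases
      case 1 thus ?thesis using \<open>k \<le> n\<close> ub vb ku' kv by (auto simp: el_def lei_def Dn_sub)
    next
      case 2 thus ?thesis using \<open>k \<le> n\<close> ub vb ku' kv by (auto simp: el_def lei_def sub_XB)
    next
      case 3 thus ?thesis using \<open>k \<le> n\<close> ub vb ku' kv by (auto simp: el_def lei_def Dn_sub)
    qed
  next
    case 2
    consider "k' \<le> n" | "k' = n+1" | "n+2 \<le> k'" by linarith
    then show ?thesis
    proof cases
      case 1 thus ?thesis using \<open>k = n+1\<close> ub vb ku kv by (auto simp: el_def lei_def XB_sub B_in)
    next
      case 2 thus ?thesis using \<open>k = n+1\<close> ub vb ku kv by (auto simp: el_def lei_def BC_sub B_notin)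
    next
      case 3 thus ?thesis using \<open>k = n+1\<close> ub vb ku kv by (auto simp: el_def lei_def Dn_def)
    qed
  next
    case 3
    hence ku': "\<not> b" using ku by auto
    consider "k' \<le> n" | "k' = n+1" | "n+2 \<le> k'" by linarith
    then show ?thesis
    proof cases
      case 1 thus ?thesis using \<open>n+2 \<le> k\<close> ub vb ku' ku kv by (auto simp: el_def lei_def Dn_sub)
    next
      case 2 thus ?thesis using \<open>n+2 \<le> k\<close> ub vb ku' ku kv by (auto simp: el_def lei_def sub_XB)
    next
      case 3 thus ?thesis using \<open>n+2 \<le> k\<close> ub vb ku' ku kv by (auto simp: el_def lei_def Dn_sub)
    qed
  qed
qed

lemma el_inj: "inj_on (el n) (Ix n)"
proof (rule inj_onI)
  fix u v assume u: "u \<in> Ix n" and v: "v \<in> Ix n" and e: "el n u = el n v"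
  hence "lei u v" "lei v u" using el_iso[OF u v] el_iso[OF v u] by auto
  thus "u = v" by (auto simp: lei_def)
qed

lemma Dn_ideal: "Dn n m \<in> R n"
  by (auto simp: R_def order_ideals_def Dn_def T_le_def)

lemma XB_ideal: "insert B (Dn n n) \<in> R n" "insert C (Dn n n) \<in> R n"
  by (auto simp: R_def order_ideals_def Dn_def T_le_def)

lemma el_in: "el n u \<in> R n"
  by (auto simp: el_def Dn_ideal XB_ideal)

lemma R_cases:
  assumes I: "I \<in> R n"
  shows "\<exists>u\<in>Ix n. I = el n u"
proof -
  have sub: "I \<subseteq> T_carrier n" and dn: "\<And>x y. x \<in> I \<Longrightarrow> y \<in> T_carrier n \<Longrightarrow> T_le n y x \<Longrightarrow> y \<in> I"
    using I by (auto simp: R_def order_ideals_def)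
  have fin: "finite I" using sub T_finite finite_subset by blast
  show ?thesis
  proof (cases "B \<in> I \<and> C \<notin> I")
    case True
    have "I = insert B (Dn n n)"
    proof
      show "I \<subseteq> insert B (Dn n n)"
      proof
        fix x assume x: "x \<in> I"
        hence xT: "x \<in> T_carrier n" using sub by auto
        show "x \<in> insert B (Dn n n)"
        proof (cases x)
          case (E i)
          hence "T_le n C x" using xT by (auto simp: T_le_def)
          hence "C \<in> I" using dn[OF x] by simp
          thus ?thesis using True by simp
        qed (use xT True x in \<open>auto simp: Dn_def\<close>)
      qed
      show "insert B (Dn n n) \<subseteq> I"
      proof
        fix x assume x: "x \<in> insert B (Dn n n)"
        show "x \<in> I"
        proof (cases "x = B")
          case False
          hence "x \<in> T_carrier n" "T_level n x \<le> n" using x by (auto simp: Dn_def)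
          hence "T_le n x B" by (simp add: T_le_def)
          thus ?thesis using dn True \<open>x \<in> T_carrier n\<close> by blast
        qed (use True in simp)
      qed
    qed
    moreover have "(n+1,False) \<in> Ix n" by (simp add: Ix_mem)
    ultimately show ?thesis by (intro bexI[of _ "(n+1,False)"]) (auto simp: el_def)
  next
    case notB: False
    show ?thesis
    proof (cases "C \<in> I \<and> B \<notin> I")
      case True
      have "I = insert C (Dn n n)"
      proof
        show "I \<subseteq> insert C (Dn n n)"
        proof
          fix x assume x: "x \<in> I"
          hence xT: "x \<in> T_carrier n" using sub by auto
          show "x \<in> insert C (Dn n n)"
          proof (cases x)
            case (E i)
            hence "T_le n B x" using xT by (auto simp: T_le_def)
            hence "B \<in> I" using dn[OF x] by simp
            thus ?thesis using True by simp
          qed (use xT True x in \<open>auto simp: Dn_def\<close>)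
        qed
        show "insert C (Dn n n) \<subseteq> I"
        proof
          fix x assume x: "x \<in> insert C (Dn n n)"
          show "x \<in> I"
          proof (cases "x = C")
            case False
            hence "x \<in> T_carrier n" "T_level n x \<le> n" using x by (auto simp: Dn_def)
            hence "T_le n x C" by (simp add: T_le_def)
            thus ?thesis using dn True \<open>x \<in> T_carrier n\<close> by blast
          qed (use True in simp)
        qed
      qed
      moreover have "(n+1,True) \<in> Ix n" by (simp add: Ix_mem)
      ultimately show ?thesis by (intro bexI[of _ "(n+1,True)"]) (auto simp: el_def)
    next
      case notC: False
      have BC: "B \<in> I \<longleftrightarrow> C \<in> I" using notB notC by blast
      show ?thesis
      proof (cases "I = {}")
        case True
        have "Dn n 0 = {}" using lev_pos by (fastforce simp: Dn_def)
        moreover have "(0,False) \<in> Ix n" by (simp add: Ix_mem)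
        ultimately show ?thesis using True by (intro bexI[of _ "(0,False)"]) (auto simp: el_def)
      next
        case False
        define m where "m = Max (T_level n ` I)"
        have "m \<in> T_level n ` I" unfolding m_def using fin False by (intro Max_in) auto
        then obtain y where y: "y \<in> I" "T_level n y = m" by auto
        have m2: "m \<le> 2*n+1" using y sub lev_le by auto
        have m1: "1 \<le> m" using y sub lev_pos by auto
        have "I = Dn n m"
        proof
          show "I \<subseteq> Dn n m"
            using sub fin by (auto simp: Dn_def m_def)
          show "Dn n m \<subseteq> I"
          proof
            fix x assume "x \<in> Dn n m"
            hence xT: "x \<in> T_carrier n" and xl: "T_level n x \<le> m" by (auto simp: Dn_def)
            show "x \<in> I"
            proof (cases "T_level n x < m")
              case True
              hence "T_le n x y" using y by (simp add: T_le_def)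
              thus ?thesis using dn[OF y(1) xT] by simp
            next
              case False
              hence "T_level n x = T_level n y" using xl y by simp
              from lev_eq[OF xT _ this] y sub have "x = y \<or> (x \<in> {B,C} \<and> y \<in> {B,C})" by auto
              thus ?thesis using y BC by auto
            qed
          qed
        qed
        show ?thesis
        proof (cases "m \<le> n")
          case True
          have "(m,False) \<in> Ix n" using True by (simp add: Ix_mem)
          thus ?thesis using True \<open>I = Dn n m\<close> by (intro bexI[of _ "(m,False)"]) (auto simp: el_def)
        next
          case False
          have "(m+1,False) \<in> Ix n" using m2 by (simp add: Ix_mem)
          thus ?thesis using False \<open>I = Dn n m\<close> by (intro bexI[of _ "(m+1,False)"]) (auto simp: el_def)
        qed
      qed
    qed
  qed
qed

lemma R_eq: "R n = el n ` Ix n"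
  using R_cases el_in by blast



lemma adj_mem: "hasse_adj S le a b \<Longrightarrow> a \<in> S \<and> b \<in> S"
  by (auto simp: hasse_adj_def covers_def)

lemma cov_transport:
  assumes inj: "inj_on h I" and iso: "\<And>u v. u \<in> I \<Longrightarrow> v \<in> I \<Longrightarrow> le (h u) (h v) \<longleftrightarrow> le' u v"
    and S: "S = h ` I" and a: "a \<in> I" and b: "b \<in> I"
  shows "covers S le (h a) (h b) \<longleftrightarrow> covers I le' a b"
proof -
  have e: "h x = h y \<longleftrightarrow> x = y" if "x \<in> I" "y \<in> I" for x y
    using inj that unfolding inj_on_def by blast
  have bex: "(\<exists>z\<in>S. le (h a) z \<and> h a \<noteq> z \<and> le z (h b) \<and> z \<noteq> h b) \<longleftrightarrow>
             (\<exists>z\<in>I. le' a z \<and> a \<noteq> z \<and> le' z b \<and> z \<noteq> b)"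
  proof
    assume "\<exists>z\<in>S. le (h a) z \<and> h a \<noteq> z \<and> le z (h b) \<and> z \<noteq> h b"
    then obtain w where w: "w \<in> I" "le (h a) (h w)" "h a \<noteq> h w" "le (h w) (h b)" "h w \<noteq> h b"
      unfolding S by blast
    have "le' a w" using iso[OF a w(1)] w(2) by simp
    moreover have "le' w b" using iso[OF w(1) b] w(4) by simp
    moreover have "a \<noteq> w" "w \<noteq> b" using w(3,5) by auto
    ultimately show "\<exists>z\<in>I. le' a z \<and> a \<noteq> z \<and> le' z b \<and> z \<noteq> b" using w(1) by blast
  next
    assume "\<exists>z\<in>I. le' a z \<and> a \<noteq> z \<and> le' z b \<and> z \<noteq> b"
    then obtain w where w: "w \<in> I" "le' a w" "a \<noteq> w" "le' w b" "w \<noteq> b" by blast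
    have "le (h a) (h w)" using iso[OF a w(1)] w(2) by simp
    moreover have "le (h w) (h b)" using iso[OF w(1) b] w(4) by simp
    moreover have "h a \<noteq> h w" using e[OF a w(1)] w(3) by simp
    moreover have "h w \<noteq> h b" using e[OF w(1) b] w(5) by simp
    moreover have "h w \<in> S" using S w by simp
    ultimately show "\<exists>z\<in>S. le (h a) z \<and> h a \<noteq> z \<and> le z (h b) \<and> z \<noteq> h b" by blast
  qed
  have m: "h a \<in> S" "h b \<in> S" using S a b by auto
  have "covers S le (h a) (h b) \<longleftrightarrow> le (h a) (h b) \<and> h a \<noteq> h b \<and>
     \<not> (\<exists>z\<in>S. le (h a) z \<and> h a \<noteq> z \<and> le z (h b) \<and> z \<noteq> h b)"
    unfolding covers_def using m by simp
  also have "\<dots> \<longleftrightarrow> le' a b \<and> a \<noteq> b \<and> \<not> (\<exists>z\<in>I. le' a z \<and> a \<noteq> z \<and> le' z b \<and> z \<noteq> b)"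
    using bex iso[OF a b] e[OF a b] by simp
  also have "\<dots> \<longleftrightarrow> covers I le' a b" unfolding covers_def using a b by simp
  finally show ?thesis .
qed

lemma adj_transport:
  assumes inj: "inj_on h I" and iso: "\<And>u v. u \<in> I \<Longrightarrow> v \<in> I \<Longrightarrow> le (h u) (h v) \<longleftrightarrow> le' u v"
    and S: "S = h ` I" and a: "a \<in> I" and b: "b \<in> I"
  shows "hasse_adj S le (h a) (h b) \<longleftrightarrow> hasse_adj I le' a b"
  unfolding hasse_adj_def using cov_transport[where h=h and I=I and le=le and le'=le' and S=S, OF inj iso S a b] cov_transport[where h=h and I=I and le=le and le'=le' and S=S, OF inj iso S b a] by simp

lemma walk_transport:
  assumes inj: "inj_on h I" and iso: "\<And>u v. u \<in> I \<Longrightarrow> v \<in> I \<Longrightarrow> le (h u) (h v) \<longleftrightarrow> le' u v"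
    and S: "S = h ` I" and u: "u \<in> I" and v: "v \<in> I"
  shows "(\<exists>f. f 0 = h u \<and> f k = h v \<and> (\<forall>i<k. hasse_adj S le (f i) (f (Suc i)))) \<longleftrightarrow>
         (\<exists>g. g 0 = u \<and> g k = v \<and> (\<forall>i<k. hasse_adj I le' (g i) (g (Suc i))))"
proof
  assume "\<exists>f. f 0 = h u \<and> f k = h v \<and> (\<forall>i<k. hasse_adj S le (f i) (f (Suc i)))"
  then obtain f where f: "f 0 = h u" "f k = h v" "\<forall>i<k. hasse_adj S le (f i) (f (Suc i))" by blast
  have fS: "f i \<in> S" if "i \<le> k" for i
  proof (cases i)
    case 0 thus ?thesis using f(1) S u by simp
  next
    case (Suc j)
    hence "j < k" using that by simp
    hence "hasse_adj S le (f j) (f (Suc j))" using f(3) by simp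
    from adj_mem[OF this] show ?thesis using Suc by simp
  qed
  define g where "g i = inv_into I h (f i)" for i
  have gI: "g i \<in> I" if "i \<le> k" for i
    unfolding g_def using fS[OF that] S by (simp add: inv_into_into)
  have eg: "h (g i) = f i" if "i \<le> k" for i
    unfolding g_def using fS[OF that] S by (simp add: f_inv_into_f)
  have "g 0 = u" unfolding g_def f(1) using inj u by (rule inv_into_f_f)
  moreover have "g k = v" unfolding g_def f(2) using inj v by (rule inv_into_f_f)
  moreover have "\<forall>i<k. hasse_adj I le' (g i) (g (Suc i))"
  proof (intro allI impI)
    fix i assume i: "i < k"
    have "hasse_adj S le (f i) (f (Suc i))" using f(3) i by simp
    hence "hasse_adj S le (h (g i)) (h (g (Suc i)))" using eg[of i] eg[of "Suc i"] i by simp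
    thus "hasse_adj I le' (g i) (g (Suc i))"
      using adj_transport[where h=h and I=I and le=le and le'=le' and S=S, OF inj iso S gI[of i] gI[of "Suc i"]] i by simp
  qed
  ultimately show "\<exists>g. g 0 = u \<and> g k = v \<and> (\<forall>i<k. hasse_adj I le' (g i) (g (Suc i)))" by blast
next
  assume "\<exists>g. g 0 = u \<and> g k = v \<and> (\<forall>i<k. hasse_adj I le' (g i) (g (Suc i)))"
  then obtain g where g: "g 0 = u" "g k = v" "\<forall>i<k. hasse_adj I le' (g i) (g (Suc i))" by blast
  have "\<forall>i<k. hasse_adj S le (h (g i)) (h (g (Suc i)))"
  proof (intro allI impI)
    fix i assume "i < k"
    hence a: "hasse_adj I le' (g i) (g (Suc i))" using g(3) by simp
    from adj_mem[OF a] have "g i \<in> I" "g (Suc i) \<in> I" by auto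
    thus "hasse_adj S le (h (g i)) (h (g (Suc i)))" using adj_transport[where h=h and I=I and le=le and le'=le' and S=S, OF inj iso S] a by simp
  qed
  thus "\<exists>f. f 0 = h u \<and> f k = h v \<and> (\<forall>i<k. hasse_adj S le (f i) (f (Suc i)))"
    using g by (intro exI[of _ "h \<circ> g"]) simp
qed

lemma transport:
  assumes inj: "inj_on h I" and iso: "\<And>u v. u \<in> I \<Longrightarrow> v \<in> I \<Longrightarrow> le (h u) (h v) \<longleftrightarrow> le' u v"
    and S: "S = h ` I" and u: "u \<in> I" and v: "v \<in> I"
  shows "hasse_dist S le (h u) (h v) = hasse_dist I le' u v"
  unfolding hasse_dist_def using walk_transport[where h=h and I=I and le=le and le'=le' and S=S, OF inj iso S u v] by simp



theorem theorem1p8: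
  fixes n :: nat
  shows "real (dist_sum (R n) (\<subseteq>)) = 2 / 3 * (real n + 3) * (4 * real n ^ 2 + 9 * real n + 8)"
proof -
  have hd: "hasse_dist (R n) (\<subseteq>) (el n u) (el n v) = dI u v" if "u \<in> Ix n" "v \<in> Ix n" for u v
    using transport[where h="el n" and I="Ix n" and le="(\<subseteq>)" and le'=lei and S="R n", OF el_inj el_iso R_eq that] dist_Ix[OF that] by simp
  have "dist_sum (R n) (\<subseteq>) = (\<Sum>u\<in>Ix n. \<Sum>v\<in>Ix n. hasse_dist (R n) (\<subseteq>) (el n u) (el n v))"
  proof -
    have r: "sum g (R n) = (\<Sum>u\<in>Ix n. g (el n u))" for g :: "tnode set \<Rightarrow> nat"
      unfolding R_eq by (rule sum.reindex[OF el_inj, unfolded comp_def])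
    show ?thesis unfolding dist_sum_def by (simp only: r)
  qed
  also have "\<dots> = (\<Sum>u\<in>Ix n. \<Sum>v\<in>Ix n. dI u v)"
    by (intro sum.cong refl) (simp add: hd)
  finally have D: "dist_sum (R n) (\<subseteq>) = (\<Sum>u\<in>Ix n. \<Sum>v\<in>Ix n. dI u v)" .
  define N where "N = (\<Sum>u\<in>Ix n. \<Sum>v\<in>Ix n. dI u v)"
  have "3 * int N = 8*int n^3 + 42*int n^2 + 70*int n + 48" unfolding N_def by (rule sum_Ix)
  hence "real_of_int (3 * int N) = real_of_int (8*int n^3 + 42*int n^2 + 70*int n + 48)" by simp
  hence h: "3 * real N = 8*real n^3 + 42*real n^2 + 70*real n + 48" by simp
  have "real N = (3 * real N) / 3" by simp
  also have "\<dots> = (8*real n^3 + 42*real n^2 + 70*real n + 48) / 3" by (simp only: h)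
  also have "(8*real n^3 + 42*real n^2 + 70*real n + 48) / 3 = 2 / 3 * (real n + 3) * (4 * real n ^ 2 + 9 * real n + 8)"
    by (simp add: field_simps power2_eq_square power3_eq_cube)
  finally show ?thesis unfolding D N_def[symmetric] .
qed

end
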